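(* For a topological space $X$ with a locally countable $\pi$-base, the game $\mathsf{BM}_\omega(X)$ is determined, i.e. one of the two players has a winning strategy.
   Context: A family $\mathcal{B}$ of non-empty open sets of $X$ is a $\pi$-base if every non-empty open set of $X$ contains a member of $\mathcal{B}$; it is locally countable if each member of $\mathcal{B}$ contains only countably many members of $\mathcal{B}$. The game $\mathsf{BM}_\omega(X)$: \textsc{Alice} plays a non-empty open set $A_0$; \textsc{Bob} plays a countable collection $\mathcal{B}_0$ of non-empty open subsets of $A_0$; in inning $n+1$, for each $B \in \mathcal{B}_n$ \textsc{Alice} plays a non-empty open set $A_B \subseteq B$, letting $\mathcal{A}_{n+1}=\{A_B : B\in\mathcal{B}_n\}$, and \textsc{Bob} plays a countable collection $\mathcal{B}_{n+1}$ of non-empty open subsets of $\bigcup\mathcal{A}_{n+1}$. \textsc{Bob} wins if $\bigcap_{n}\bigcup\mathcal{B}_n\neq\emptyset$, otherwise \textsc{Alice} wins. *)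

theory Defs
  imports "HOL-Analysis.Analysis"
begin

definition pi_base :: "'a topology \<Rightarrow> 'a set set \<Rightarrow> bool" where
  "pi_base X \<B> \<longleftrightarrow>
     (\<forall>B\<in>\<B>. openin X B \<and> B \<noteq> {}) \<and>
     (\<forall>U. openin X U \<and> U \<noteq> {} \<longrightarrow> (\<exists>B\<in>\<B>. B \<subseteq> U))"

definition locally_countable_family :: "'a set set \<Rightarrow> bool" where
  "locally_countable_family \<B> \<longleftrightarrow> (\<forall>B\<in>\<B>. countable {C\<in>\<B>. C \<subseteq> B})"

text \<open>A play is described by
  A0 :: Alice's opening move (a nonempty open set),
  f n :: Alice's move in inning n+1, a function assigning to each B in Bs n the set A_B,
  Bs n :: Bob's move in inning n (a countable family of nonempty open sets).\<close>

definition BM_alice_legal0 :: "'a topology \<Rightarrow> 'a set \<Rightarrow> bool" where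
  "BM_alice_legal0 X A0 \<longleftrightarrow> openin X A0 \<and> A0 \<noteq> {}"

definition BM_alice_legal :: "'a topology \<Rightarrow> ('a set set) \<Rightarrow> ('a set \<Rightarrow> 'a set) \<Rightarrow> bool" where
  "BM_alice_legal X Bn g \<longleftrightarrow> (\<forall>B\<in>Bn. openin X (g B) \<and> g B \<noteq> {} \<and> g B \<subseteq> B)"

definition BM_bob_legal :: "'a topology \<Rightarrow> 'a set \<Rightarrow> 'a set set \<Rightarrow> bool" where
  "BM_bob_legal X S Bn \<longleftrightarrow> countable Bn \<and> (\<forall>B\<in>Bn. openin X B \<and> B \<noteq> {} \<and> B \<subseteq> S)"

text \<open>The set Bob's collection in inning n must lie in: A0 for n = 0,
  the union of Alice's sets A_B (B in Bs (n-1)) otherwise.\<close>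
definition BM_region :: "'a set \<Rightarrow> (nat \<Rightarrow> 'a set \<Rightarrow> 'a set) \<Rightarrow> (nat \<Rightarrow> 'a set set) \<Rightarrow> nat \<Rightarrow> 'a set" where
  "BM_region A0 f Bs n = (if n = 0 then A0 else \<Union> (f (n - 1) ` Bs (n - 1)))"

definition BM_bob_wins :: "(nat \<Rightarrow> 'a set set) \<Rightarrow> bool" where
  "BM_bob_wins Bs \<longleftrightarrow> (\<Inter>n. \<Union> (Bs n)) \<noteq> {}"

text \<open>Strategies (perfect information; each player's strategy depends on the
  opponent's previous moves, which together with the strategy determine the whole history).
  Alice: opening move a0 and sigma [Bs 0, ..., Bs n] = her answer to Bs n.
  Bob: tau A0 [f 0, ..., f (n-1)] = his move in inning n.\<close>

definition BM_alice_winning ::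
  "'a topology \<Rightarrow> 'a set \<Rightarrow> ('a set set list \<Rightarrow> 'a set \<Rightarrow> 'a set) \<Rightarrow> bool" where
  "BM_alice_winning X a0 \<sigma> \<longleftrightarrow> BM_alice_legal0 X a0 \<and>
     (\<forall>Bs :: nat \<Rightarrow> 'a set set.
        let f = (\<lambda>n. \<sigma> (map Bs [0..<Suc n])) in
        (\<forall>n. (\<forall>k\<le>n. BM_bob_legal X (BM_region a0 f Bs k) (Bs k))
               \<longrightarrow> BM_alice_legal X (Bs n) (f n)) \<and>
        ((\<forall>n. BM_bob_legal X (BM_region a0 f Bs n) (Bs n)) \<longrightarrow> \<not> BM_bob_wins Bs))"

definition BM_bob_winning ::
  "'a topology \<Rightarrow> ('a set \<Rightarrow> ('a set \<Rightarrow> 'a set) list \<Rightarrow> 'a set set) \<Rightarrow> bool" where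
  "BM_bob_winning X \<tau> \<longleftrightarrow>
     (\<forall>A0 (f :: nat \<Rightarrow> 'a set \<Rightarrow> 'a set).
        let Bs = (\<lambda>n. \<tau> A0 (map f [0..<n])) in
        (\<forall>n. (BM_alice_legal0 X A0 \<and> (\<forall>k<n. BM_alice_legal X (Bs k) (f k)))
               \<longrightarrow> BM_bob_legal X (BM_region A0 f Bs n) (Bs n)) \<and>
        ((BM_alice_legal0 X A0 \<and> (\<forall>n. BM_alice_legal X (Bs n) (f n))) \<longrightarrow> BM_bob_wins Bs))"

definition BM_omega_determined :: "'a topology \<Rightarrow> bool" where
  "BM_omega_determined X \<longleftrightarrow>
     (\<exists>a0 \<sigma>. BM_alice_winning X a0 \<sigma>) \<or> (\<exists>\<tau>. BM_bob_winning X \<tau>)"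

end

theory Submission
  imports Defs
begin

primrec bobT :: "'a set set \<Rightarrow> 'a set \<Rightarrow> (nat \<Rightarrow> 'a set \<Rightarrow> 'a set) \<Rightarrow> nat \<Rightarrow> 'a set set" where
  "bobT PB B0 g 0 = {C\<in>PB. C \<subseteq> B0}"
| "bobT PB B0 g (Suc n) = {C\<in>PB. C \<subseteq> B0 \<and> C \<subseteq> \<Union> (g n ` bobT PB B0 g n)}"

lemma bobT_cong: "(\<forall>i<k. g i = h i) \<Longrightarrow> bobT PB B0 g k = bobT PB B0 h k"
  by (induction k) auto

lemma bobT_sub: "bobT PB B0 g k \<subseteq> {C\<in>PB. C \<subseteq> B0}"
  by (cases k) auto

lemma alice_case:
  assumes B0: "openin X B0" "B0 \<noteq> {}"
    and W: "\<And>n. openin X (W n)" "\<And>n U. openin X U \<Longrightarrow> U \<noteq> {} \<Longrightarrow> U \<subseteq> B0 \<Longrightarrow> U \<inter> W n \<noteq> {}"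
    and WB: "\<And>n. W n \<subseteq> B0" and E: "(\<Inter>n. W n) = {}"
  shows "BM_alice_winning X B0 (\<lambda>L B. B \<inter> W (length L - 1))"
  unfolding BM_alice_winning_def
proof (intro conjI allI)
  show "BM_alice_legal0 X B0" using B0 by (simp add: BM_alice_legal0_def)
next
  fix Bs :: "nat \<Rightarrow> 'a set set"
  have feq: "(\<lambda>n. (\<lambda>L B. B \<inter> W (length L - 1)) (map Bs [0..<Suc n])) = (\<lambda>n B. B \<inter> W n)"
    by simp
  have reg: "BM_region B0 (\<lambda>n B. B \<inter> W n) Bs n \<subseteq> B0" for n
  proof (cases n)
    case 0 then show ?thesis by (simp add: BM_region_def)
  next
    case (Suc m)
    have "W m \<subseteq> B0" using WB by blast
    then show ?thesis using Suc by (auto simp: BM_region_def)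
  qed
  show "let f = (\<lambda>n. (\<lambda>L B. B \<inter> W (length L - 1)) (map Bs [0..<Suc n])) in
        (\<forall>n. (\<forall>k\<le>n. BM_bob_legal X (BM_region B0 f Bs k) (Bs k))
               \<longrightarrow> BM_alice_legal X (Bs n) (f n)) \<and>
        ((\<forall>n. BM_bob_legal X (BM_region B0 f Bs n) (Bs n)) \<longrightarrow> \<not> BM_bob_wins Bs)"
    unfolding feq Let_def
  proof (intro conjI allI impI)
    fix n
    assume "\<forall>k\<le>n. BM_bob_legal X (BM_region B0 (\<lambda>n B. B \<inter> W n) Bs k) (Bs k)"
    then have L: "BM_bob_legal X (BM_region B0 (\<lambda>n B. B \<inter> W n) Bs n) (Bs n)" by simp
    show "BM_alice_legal X (Bs n) (\<lambda>B. B \<inter> W n)"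
      unfolding BM_alice_legal_def
    proof
      fix B assume "B \<in> Bs n"
      with L reg[of n] have "openin X B" "B \<noteq> {}" "B \<subseteq> B0"
        unfolding BM_bob_legal_def by auto
      then show "openin X (B \<inter> W n) \<and> B \<inter> W n \<noteq> {} \<and> B \<inter> W n \<subseteq> B"
        using W by auto
    qed
  next
    assume L: "\<forall>n. BM_bob_legal X (BM_region B0 (\<lambda>n B. B \<inter> W n) Bs n) (Bs n)"
    have "\<Union> (Bs (Suc n)) \<subseteq> W n" for n
      using L[rule_format, of "Suc n"] by (auto simp: BM_bob_legal_def BM_region_def)
    then have "(\<Inter>n. \<Union> (Bs n)) \<subseteq> (\<Inter>n. W n)" by blast
    then show "\<not> BM_bob_wins Bs" using E by (auto simp: BM_bob_wins_def)
  qed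
qed


lemma bob_case:
  assumes PB: "pi_base X PB" "locally_countable_family PB"
    and Baire: "\<forall>B0 (W::nat \<Rightarrow> 'a set). openin X B0 \<and> B0 \<noteq> {} \<and> (\<forall>n. openin X (W n) \<and> W n \<subseteq> B0 \<and>
        (\<forall>U. openin X U \<and> U \<noteq> {} \<and> U \<subseteq> B0 \<longrightarrow> U \<inter> W n \<noteq> {})) \<longrightarrow> (\<Inter>n. W n) \<noteq> {}"
  shows "BM_bob_winning X (\<lambda>A0 fs. bobT PB (SOME B. B \<in> PB \<and> B \<subseteq> A0) (\<lambda>i. fs ! i) (length fs))"
  unfolding BM_bob_winning_def Let_def
proof (intro allI conjI impI)
  fix A0 and f :: "nat \<Rightarrow> 'a set \<Rightarrow> 'a set"
  define B0 where "B0 = (SOME B. B \<in> PB \<and> B \<subseteq> A0)"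
  have Bs_eq: "(\<lambda>n. bobT PB (SOME B. B \<in> PB \<and> B \<subseteq> A0) (\<lambda>i. map f [0..<n] ! i) (length (map f [0..<n])))
      = (\<lambda>n. bobT PB B0 f n)"
  proof
    fix n show "bobT PB (SOME B. B \<in> PB \<and> B \<subseteq> A0) (\<lambda>i. map f [0..<n] ! i) (length (map f [0..<n])) = bobT PB B0 f n"
      unfolding B0_def length_map length_upt diff_zero by (rule bobT_cong) simp
  qed
  have Bs_eqn: "\<And>n. bobT PB (SOME B. B \<in> PB \<and> B \<subseteq> A0) (\<lambda>i. map f [0..<n] ! i) (length (map f [0..<n])) = bobT PB B0 f n"
    by (rule fun_cong[OF Bs_eq])
  have PBo: "\<And>B. B \<in> PB \<Longrightarrow> openin X B \<and> B \<noteq> {}"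
    and PBs: "\<And>U. openin X U \<Longrightarrow> U \<noteq> {} \<Longrightarrow> \<exists>B\<in>PB. B \<subseteq> U"
    using PB(1) unfolding pi_base_def by auto
  {
    assume A0: "BM_alice_legal0 X A0"
    have ex: "\<exists>B. B \<in> PB \<and> B \<subseteq> A0" using A0 PBs by (auto simp: BM_alice_legal0_def)
    have B0c: "B0 \<in> PB \<and> B0 \<subseteq> A0" unfolding B0_def by (rule someI_ex[OF ex])
    then have B0: "B0 \<in> PB" "B0 \<subseteq> A0" by auto
    have cnt: "countable (bobT PB B0 f n)" for n
    proof (rule countable_subset[OF bobT_sub])
      show "countable {C \<in> PB. C \<subseteq> B0}" using PB(2) B0(1) unfolding locally_countable_family_def by blast
    qed
    note B0 cnt
  } note basic = this
  show "BM_bob_legal X (BM_region A0 f (\<lambda>n. bobT PB (SOME B. B \<in> PB \<and> B \<subseteq> A0) (\<lambda>i. map f [0..<n] ! i) (length (map f [0..<n]))) n)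
          (bobT PB (SOME B. B \<in> PB \<and> B \<subseteq> A0) (\<lambda>i. map f [0..<n] ! i) (length (map f [0..<n])))"
    if H: "BM_alice_legal0 X A0 \<and> (\<forall>k<n. BM_alice_legal X (bobT PB (SOME B. B \<in> PB \<and> B \<subseteq> A0) (\<lambda>i. map f [0..<k] ! i) (length (map f [0..<k]))) (f k))" for n
  proof -
    have A0: "BM_alice_legal0 X A0" using H by blast
    note bb = basic[OF A0]
    show ?thesis unfolding Bs_eq Bs_eqn
      unfolding BM_bob_legal_def
    proof (intro conjI ballI)
      show "countable (bobT PB B0 f n)" by (rule bb(3))
    next
      fix C assume C: "C \<in> bobT PB B0 f n"
      then have "C \<in> PB" using bobT_sub by blast
      then show "openin X C" "C \<noteq> {}" using PBo by auto
      show "C \<subseteq> BM_region A0 f (\<lambda>n. bobT PB B0 f n) n"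
        using C bb(2) by (cases n) (auto simp: BM_region_def)
    qed
  qed
  show "BM_bob_wins (\<lambda>n. bobT PB (SOME B. B \<in> PB \<and> B \<subseteq> A0) (\<lambda>i. map f [0..<n] ! i) (length (map f [0..<n])))"
    if H: "BM_alice_legal0 X A0 \<and> (\<forall>n. BM_alice_legal X (bobT PB (SOME B. B \<in> PB \<and> B \<subseteq> A0) (\<lambda>i. map f [0..<n] ! i) (length (map f [0..<n]))) (f n))"
  proof -
    have A0: "BM_alice_legal0 X A0" using H by blast
    note bb = basic[OF A0]
    have AL: "BM_alice_legal X (bobT PB B0 f n) (f n)" for n
      using H unfolding Bs_eqn by blast
    have dense: "\<exists>C\<in>bobT PB B0 f n. C \<subseteq> U" if "openin X U" "U \<noteq> {}" "U \<subseteq> B0" for n U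
    proof (induction n)
      case 0
      then show ?case using PBs[OF that(1,2)] that(3) by auto
    next
      case (Suc n)
      then obtain C where C: "C \<in> bobT PB B0 f n" "C \<subseteq> U" by blast
      then have "openin X (f n C)" "f n C \<noteq> {}" "f n C \<subseteq> C"
        using AL[of n] unfolding BM_alice_legal_def by auto
      then obtain C' where C': "C' \<in> PB" "C' \<subseteq> f n C" using PBs by blast
      have "C' \<in> bobT PB B0 f (Suc n)"
        using C C' \<open>f n C \<subseteq> C\<close> that(3) by auto
      then show ?case using C' C \<open>f n C \<subseteq> C\<close> by blast
    qed
    have "(\<Inter>n. \<Union> (bobT PB B0 f n)) \<noteq> {}"
    proof (rule mp[OF Baire[THEN spec, THEN spec, of B0 "\<lambda>n. \<Union> (bobT PB B0 f n)"]], intro conjI allI impI)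
      show "openin X B0" "B0 \<noteq> {}" using PBo bb(1) by auto
    next
      fix n
      show "openin X (\<Union> (bobT PB B0 f n))"
        using PBo bobT_sub by (intro openin_Union) blast
      show "\<Union> (bobT PB B0 f n) \<subseteq> B0" using bobT_sub by blast
      fix U assume "openin X U \<and> U \<noteq> {} \<and> U \<subseteq> B0"
      then obtain C where "C \<in> bobT PB B0 f n" "C \<subseteq> U" using dense by blast
      moreover have "C \<noteq> {}" using calculation(1) bobT_sub PBo by blast
      ultimately show "U \<inter> \<Union> (bobT PB B0 f n) \<noteq> {}" by blast
    qed
    then show ?thesis unfolding Bs_eq BM_bob_wins_def .
  qed
qed

theorem corollary3p9:
  fixes X :: "'a topology"
  assumes "\<exists>\<B>. pi_base X \<B> \<and> locally_countable_family \<B>"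
  shows "BM_omega_determined X"
proof -
  obtain PB where PB: "pi_base X PB" "locally_countable_family PB" using assms by blast
  show ?thesis
  proof (cases "\<forall>B0 (W::nat \<Rightarrow> 'a set). openin X B0 \<and> B0 \<noteq> {} \<and> (\<forall>n. openin X (W n) \<and> W n \<subseteq> B0 \<and>
        (\<forall>U. openin X U \<and> U \<noteq> {} \<and> U \<subseteq> B0 \<longrightarrow> U \<inter> W n \<noteq> {})) \<longrightarrow> (\<Inter>n. W n) \<noteq> {}")
    case True
    have "BM_bob_winning X (\<lambda>A0 fs. bobT PB (SOME B. B \<in> PB \<and> B \<subseteq> A0) (\<lambda>i. fs ! i) (length fs))"
      by (rule bob_case[OF PB True])
    then show ?thesis unfolding BM_omega_determined_def by (intro disjI2 exI)
  next
    case False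
    then obtain B0 and W :: "nat \<Rightarrow> 'a set" where H0: "openin X B0 \<and> B0 \<noteq> {} \<and> (\<forall>n. openin X (W n) \<and> W n \<subseteq> B0 \<and>
        (\<forall>U. openin X U \<and> U \<noteq> {} \<and> U \<subseteq> B0 \<longrightarrow> U \<inter> W n \<noteq> {}))" and E: "(\<Inter>n. W n) = {}"
      by blast
    have "BM_alice_winning X B0 (\<lambda>L B. B \<inter> W (length L - 1))"
      by (rule alice_case) (use H0 E in auto)
    then show ?thesis unfolding BM_omega_determined_def by (intro disjI1 exI)
  qed
qed

end
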